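(* Let $\alpha=(\alpha_1,\ldots,\alpha_n)$ be a composition, and suppose there is $1\le r\le n-1$ with $\alpha_r<\alpha_{r+1}$. Let $\alpha'=\alpha\cdot s_r$ and $V(\gamma)=\{\beta\colon\beta\le\gamma\}$. Then \[V(\alpha)=V(\alpha')\cup\{v\cdot s_r\colon v\in V(\alpha')\}.\]
   Context: A composition is a sequence of $n$ nonnegative integers. For $v\in\mathbb{R}^n$ and $w=w_1\cdots w_n\in S_n$, $v\cdot w=(v_{w_1},\ldots,v_{w_n})$; $s_r$ is the adjacent transposition $(r,r+1)$, so $v\cdot s_r$ swaps the $r$-th and $(r+1)$-th entries. $\lambda(\gamma)$ is the weakly decreasing rearrangement of $\gamma$, and $w(\gamma)$ is the unique minimal-length permutation with $\lambda(\gamma)\cdot w(\gamma)=\gamma$. For compositions $\beta,\gamma$ of length $n$, $\beta\le\gamma$ means $\lambda(\beta)=\lambda(\gamma)$ and $w(\beta)\le w(\gamma)$ in the (strong) Bruhat order on $S_n$. *)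

theory Defs
  imports Main
begin

text \<open>Compositions of length n are lists of naturals of length n (positions 0..n-1
  represent 1..n). A permutation w in S_n is represented in one-line notation as a
  list w = [w_1,...,w_n] of the values 0..n-1 (0-indexed values).\<close>

definition is_perm :: "nat \<Rightarrow> nat list \<Rightarrow> bool" where
  "is_perm n w \<longleftrightarrow> length w = n \<and> distinct w \<and> set w = {0..<n}"

definition act :: "'a list \<Rightarrow> nat list \<Rightarrow> 'a list" where
  "act v w = map (\<lambda>i. v ! i) w"

definition transp_perm :: "nat \<Rightarrow> nat \<Rightarrow> nat \<Rightarrow> nat list" where
  "transp_perm n i j = map (\<lambda>k. if k = i then j else if k = j then i else k) [0..<n]"

text \<open>Adjacent transposition s_r = (r, r+1), for 1 \<le> r \<le> n-1 (1-indexed).\<close>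
definition s_adj :: "nat \<Rightarrow> nat \<Rightarrow> nat list" where
  "s_adj n r = transp_perm n (r - 1) r"

text \<open>Coxeter length = number of inversions.\<close>
definition inv_count :: "nat list \<Rightarrow> nat" where
  "inv_count w = card {(i, j). i < j \<and> j < length w \<and> w ! i > w ! j}"

definition bruhat_cover :: "nat list \<Rightarrow> nat list \<Rightarrow> bool" where
  "bruhat_cover u w \<longleftrightarrow> is_perm (length u) u \<and>
     (\<exists>i j. i < j \<and> j < length u \<and> w = act u (transp_perm (length u) i j)
            \<and> inv_count u < inv_count w)"

definition bruhat_le :: "nat list \<Rightarrow> nat list \<Rightarrow> bool" where
  "bruhat_le u w \<longleftrightarrow> is_perm (length u) u \<and> is_perm (length w) w \<and> bruhat_cover\<^sup>*\<^sup>* u w"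

definition lam :: "nat list \<Rightarrow> nat list" where
  "lam \<gamma> = rev (sort \<gamma>)"

definition wperm :: "nat list \<Rightarrow> nat list" where
  "wperm \<gamma> = (THE w. is_perm (length \<gamma>) w \<and> act (lam \<gamma>) w = \<gamma> \<and>
      (\<forall>w'. is_perm (length \<gamma>) w' \<and> act (lam \<gamma>) w' = \<gamma> \<longrightarrow> inv_count w \<le> inv_count w'))"

definition comp_le :: "nat list \<Rightarrow> nat list \<Rightarrow> bool" where
  "comp_le \<beta> \<gamma> \<longleftrightarrow> length \<beta> = length \<gamma> \<and> lam \<beta> = lam \<gamma> \<and> bruhat_le (wperm \<beta>) (wperm \<gamma>)"

definition Vset :: "nat list \<Rightarrow> nat list set" where
  "Vset \<gamma> = {\<beta>. comp_le \<beta> \<gamma>}"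

end

theory Submission imports Defs "HOL-Library.Multiset" "HOL-Combinatorics.Permutations"
begin

definition tau :: "nat \<Rightarrow> nat \<Rightarrow> nat \<Rightarrow> nat" where
  "tau i j k = (if k = i then j else if k = j then i else k)"

lemma tau_tau[simp]: "tau i j (tau i j k) = k" by (auto simp: tau_def)
lemma tau_lt: "i < n \<Longrightarrow> j < n \<Longrightarrow> k < n \<Longrightarrow> tau i j k < n" by (auto simp: tau_def)

lemma length_act[simp]: "length (act v w) = length w" by (simp add: act_def)
lemma act_nth[simp]: "i < length w \<Longrightarrow> act v w ! i = v ! (w ! i)" by (simp add: act_def)
lemma length_tp[simp]: "length (transp_perm n i j) = n" by (simp add: transp_perm_def)
lemma tp_nth[simp]: "k < n \<Longrightarrow> transp_perm n i j ! k = tau i j k" by (simp add: transp_perm_def tau_def)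

lemma act_tp_nth: "k < n \<Longrightarrow> act u (transp_perm n i j) ! k = u ! tau i j k" by simp

lemma is_perm_tp: "i < n \<Longrightarrow> j < n \<Longrightarrow> is_perm n (transp_perm n i j)"
proof -
  assume a: "i < n" "j < n"
  have "transp_perm n i j = map (tau i j) [0..<n]" by (simp add: transp_perm_def tau_def)
  moreover have "inj_on (tau i j) {0..<n}" by (metis inj_on_inverseI tau_tau)
  moreover have "tau i j ` {0..<n} = {0..<n}"
  proof
    show "tau i j ` {0..<n} \<subseteq> {0..<n}" using a tau_lt by auto
    show "{0..<n} \<subseteq> tau i j ` {0..<n}"
    proof
      fix k assume "k \<in> {0..<n}"
      then have "tau i j k \<in> {0..<n}" "k = tau i j (tau i j k)" using a tau_lt by auto
      thus "k \<in> tau i j ` {0..<n}" by blast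
    qed
  qed
  ultimately show ?thesis by (simp add: is_perm_def distinct_map)
qed

lemma is_perm_act: assumes "is_perm n u" "is_perm n t" shows "is_perm n (act u t)"
proof -
  have lu: "length u = n" and du: "distinct u" and su: "set u = {0..<n}"
    using assms(1) unfolding is_perm_def by auto
  have lt: "length t = n" and dt: "distinct t" and st: "set t = {0..<n}"
    using assms(2) unfolding is_perm_def by auto
  have iu: "inj_on (\<lambda>i. u ! i) {0..<n}"
    using du lu by (auto simp: inj_on_def nth_eq_iff_index_eq)
  have e: "act u t = map (\<lambda>i. u ! i) t" by (simp add: act_def)
  have "set (act u t) = (\<lambda>i. u ! i) ` {0..<n}" unfolding e using st by simp
  also have "\<dots> = set u"
  proof -
    have "set u = set (map (\<lambda>i. u ! i) [0..<length u])" by (simp only: map_nth)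
    thus ?thesis using lu by simp
  qed
  finally have s1: "set (act u t) = {0..<n}" using su by simp
  have d1: "distinct (act u t)" unfolding e using dt iu st by (simp add: distinct_map)
  show ?thesis unfolding is_perm_def using s1 d1 lt by simp
qed

lemma act_tp_tp: "length u = n \<Longrightarrow> i < n \<Longrightarrow> j < n \<Longrightarrow>
   act (act u (transp_perm n i j)) (transp_perm n i j) = u"
proof -
  assume a: "length u = n" "i < n" "j < n"
  show ?thesis
  proof (rule nth_equalityI)
    show "length (act (act u (transp_perm n i j)) (transp_perm n i j)) = length u" using a by simp
    fix k assume "k < length (act (act u (transp_perm n i j)) (transp_perm n i j))"
    then have k: "k < n" by simp
    then have "tau i j k < n" using a tau_lt by blast
    then show "act (act u (transp_perm n i j)) (transp_perm n i j) ! k = u ! k"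
      using k by (simp only: act_tp_nth tau_tau)
  qed
qed

lemma act_tp_same: "length u = n \<Longrightarrow> i < n \<Longrightarrow> j < n \<Longrightarrow> u ! i = u ! j \<Longrightarrow>
   act u (transp_perm n i j) = u"
proof -
  assume a: "length u = n" "i < n" "j < n" "u ! i = u ! j"
  show ?thesis
  proof (rule nth_equalityI)
    show "length (act u (transp_perm n i j)) = length u" using a by simp
    fix k assume "k < length (act u (transp_perm n i j))"
    then have k: "k < n" by simp
    then show "act u (transp_perm n i j) ! k = u ! k"
      using a by (simp add: act_tp_nth tau_def)
  qed
qed

lemma act_assoc: "\<forall>x\<in>set c. x < length b \<Longrightarrow> act (act a b) c = act a (act b c)"
  by (auto simp: act_def)

lemma mset_act: assumes "is_perm (length v) t" shows "mset (act v t) = mset v"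
proof -
  have "mset t = mset [0..<length v]" using assms unfolding is_perm_def
    by (metis distinct_upt set_eq_iff_mset_eq_distinct set_upt)
  then have "mset (act v t) = mset (map (\<lambda>i. v ! i) [0..<length v])"
    by (simp add: act_def)
  also have "\<dots> = mset v" by (simp add: map_nth)
  finally show ?thesis .
qed

lemma lam_act: "is_perm (length v) t \<Longrightarrow> lam (act v t) = lam v"
proof -
  assume "is_perm (length v) t"
  then have "mset (sort v) = mset (act v t)" using mset_act[of v t] by (simp only: mset_sort)
  then have "sort (act v t) = sort v" using properties_for_sort sorted_sort by blast
  thus ?thesis unfolding lam_def by simp
qed

lemma length_lam[simp]: "length (lam g) = length g" by (simp add: lam_def)
lemma mset_lam: "mset (lam g) = mset g" by (simp add: lam_def)
lemma lam_desc: assumes "a \<le> b" "b < length g" shows "lam g ! b \<le> lam g ! a"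
proof -
  have "sort g ! (length g - Suc b) \<le> sort g ! (length g - Suc a)"
    using assms by (intro sorted_nth_mono) auto
  thus ?thesis using assms by (simp add: lam_def rev_nth)
qed

lemma tau_eq_iff[simp]: "tau i j a = tau i j b \<longleftrightarrow> a = b" by (metis tau_tau)

definition invs :: "nat list \<Rightarrow> (nat \<times> nat) set" where
  "invs w = {(i, j). i < j \<and> j < length w \<and> w ! i > w ! j}"

lemma inv_count_invs: "inv_count w = card (invs w)" by (simp add: inv_count_def invs_def)

lemma finite_invs: "finite (invs w)"
  by (rule finite_subset[of _ "{..<length w} \<times> {..<length w}"]) (auto simp: invs_def)

lemma swap_inc:
  assumes "length w = n" "i < j" "j < n" "w ! i < w ! j"
  shows "inv_count w < inv_count (act w (transp_perm n i j))"
proof -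
  define w' where "w' = act w (transp_perm n i j)"
  have lw': "length w' = n" using assms by (simp add: w'_def)
  have nth': "\<And>k. k < n \<Longrightarrow> w' ! k = w ! tau i j k" by (simp add: w'_def)
  define g where "g = (\<lambda>(p, q). if tau i j p < tau i j q then (tau i j p, tau i j q) else (p, q))"
  have sub: "g ` invs w \<subseteq> invs w' - {(i, j)}"
  proof
    fix x assume "x \<in> g ` invs w"
    then obtain p q where x: "x = g (p, q)" and pq: "p < q" "q < n" "w ! p > w ! q"
      using assms(1) by (auto simp: invs_def)
    have tp: "tau i j p < n" "tau i j q < n" using pq assms tau_lt by auto
    show "x \<in> invs w' - {(i, j)}"
    proof (cases "tau i j p < tau i j q")
      case True
      then have x2: "x = (tau i j p, tau i j q)" using x by (simp add: g_def)
      have "w' ! tau i j p > w' ! tau i j q" using nth' tp pq by simp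
      moreover have "(tau i j p, tau i j q) \<noteq> (i, j)"
        using pq assms(2) by (auto simp: tau_def split: if_splits)
      ultimately show ?thesis using x2 True tp lw' by (auto simp: invs_def)
    next
      case False
      then have x2: "x = (p, q)" using x by (simp add: g_def)
      have "w ! tau i j p > w ! tau i j q"
        using False pq assms(2,4) by (auto simp: tau_def split: if_splits)
      then have "w' ! p > w' ! q" using nth' pq by auto
      moreover have "(p, q) \<noteq> (i, j)" using pq assms(4) by auto
      ultimately show ?thesis using x2 pq lw' by (auto simp: invs_def)
    qed
  qed
  have inj: "inj_on g (invs w)"
  proof (rule inj_onI)
    fix x y assume "x \<in> invs w" "y \<in> invs w" "g x = g y"
    then show "x = y" unfolding g_def invs_def
      by (auto split: if_splits)
  qed
  have mem: "(i, j) \<in> invs w'" using assms lw' nth' by (auto simp: invs_def tau_def)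
  have "card (invs w) = card (g ` invs w)" using inj by (simp add: card_image)
  also have "\<dots> \<le> card (invs w' - {(i, j)})" using sub by (intro card_mono) (auto intro: finite_invs)
  also have "\<dots> < card (invs w')" using mem finite_invs
    by (metis card_Diff1_less)
  finally show ?thesis by (simp add: inv_count_invs w'_def)
qed


lemma swap_dec:
  assumes "length w = n" "i < j" "j < n" "w ! i > w ! j"
  shows "inv_count (act w (transp_perm n i j)) < inv_count w"
proof -
  define w' where "w' = act w (transp_perm n i j)"
  have l: "length w' = n" using assms by (simp add: w'_def)
  have "w' ! i < w' ! j" using assms by (simp add: w'_def tau_def)
  then have "inv_count w' < inv_count (act w' (transp_perm n i j))"
    using swap_inc[OF l assms(2,3)] by simp
  also have "act w' (transp_perm n i j) = w" unfolding w'_def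
    using act_tp_tp[of w n i j] assms by simp
  finally show ?thesis by (simp add: w'_def)
qed

lemma cover_lt:
  assumes "is_perm n u" "i < j" "j < n" "inv_count u < inv_count (act u (transp_perm n i j))"
  shows "u ! i < u ! j"
proof -
  have "u ! i \<noteq> u ! j" using assms unfolding is_perm_def by (simp add: nth_eq_iff_index_eq)
  moreover have "\<not> u ! i > u ! j"
    using swap_dec[of u n i j] assms unfolding is_perm_def by auto
  ultimately show ?thesis by simp
qed

lemma tau_s_mono: "p < q \<Longrightarrow> (p, q) \<noteq> (a, Suc a) \<Longrightarrow> tau a (Suc a) p < tau a (Suc a) q"
  by (auto simp: tau_def)

lemma conj_tp:
  assumes "length u = n" "Suc a < n" "i < n" "j < n"
  shows "act (act u (transp_perm n i j)) (transp_perm n a (Suc a)) =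
    act (act u (transp_perm n a (Suc a))) (transp_perm n (tau a (Suc a) i) (tau a (Suc a) j))"
proof (rule nth_equalityI)
  show "length (act (act u (transp_perm n i j)) (transp_perm n a (Suc a))) =
    length (act (act u (transp_perm n a (Suc a))) (transp_perm n (tau a (Suc a) i) (tau a (Suc a) j)))"
    by simp
  fix k assume "k < length (act (act u (transp_perm n i j)) (transp_perm n a (Suc a)))"
  then have k: "k < n" by simp
  have b1: "tau a (Suc a) k < n" using k assms tau_lt by simp
  have b2: "tau (tau a (Suc a) i) (tau a (Suc a) j) k < n" using k assms tau_lt by simp
  have "act (act u (transp_perm n i j)) (transp_perm n a (Suc a)) ! k = u ! tau i j (tau a (Suc a) k)"
    using k b1 by (simp only: act_tp_nth)
  also have "tau i j (tau a (Suc a) k) = tau a (Suc a) (tau (tau a (Suc a) i) (tau a (Suc a) j) k)"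
    by (simp add: tau_def)
  also have "u ! \<dots> = act (act u (transp_perm n a (Suc a))) (transp_perm n (tau a (Suc a) i) (tau a (Suc a) j)) ! k"
    using k b2 by (simp only: act_tp_nth)
  finally show "act (act u (transp_perm n i j)) (transp_perm n a (Suc a)) ! k =
    act (act u (transp_perm n a (Suc a))) (transp_perm n (tau a (Suc a) i) (tau a (Suc a) j)) ! k" .
qed

lemma cover_S:
  assumes "is_perm n x" "Suc a < n" "x ! a < x ! Suc a"
  shows "bruhat_cover x (act x (transp_perm n a (Suc a)))"
proof -
  have l: "length x = n" using assms unfolding is_perm_def by simp
  show ?thesis unfolding bruhat_cover_def using assms l swap_inc[OF l _ assms(2,3)] by auto
qed

lemma cover_conj:
  assumes "bruhat_cover y z" "length y = n" "Suc a < n"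
  obtains "z = act y (transp_perm n a (Suc a))"
    | "bruhat_cover (act y (transp_perm n a (Suc a))) (act z (transp_perm n a (Suc a)))"
proof -
  obtain i j where ij: "i < j" "j < n" "z = act y (transp_perm n i j)"
    "inv_count y < inv_count z" and py: "is_perm n y"
    using assms unfolding bruhat_cover_def by auto
  show ?thesis
  proof (cases "(i, j) = (a, Suc a)")
    case True then show ?thesis using that ij by auto
  next
    case False
    let ?S = "transp_perm n a (Suc a)"
    let ?i = "tau a (Suc a) i" and ?j = "tau a (Suc a) j"
    have lt: "?i < ?j" using tau_s_mono[OF ij(1) False] .
    have jn: "?j < n" "?i < n" using ij assms tau_lt by auto
    have yij: "y ! i < y ! j" using cover_lt[OF py ij(1,2)] ij by simp
    have pS: "is_perm n (act y ?S)" using is_perm_act[OF py is_perm_tp] assms by simp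
    have lS: "length (act y ?S) = n" by simp
    have ce: "act z ?S = act (act y ?S) (transp_perm n ?i ?j)"
      using conj_tp[OF assms(2,3), of i j] ij by simp
    have v: "act y ?S ! ?i < act y ?S ! ?j" using jn yij by simp
    have "inv_count (act y ?S) < inv_count (act z ?S)"
      unfolding ce using swap_inc[OF lS lt jn(1) v] .
    then have "bruhat_cover (act y ?S) (act z ?S)"
      unfolding bruhat_cover_def using pS lS lt jn ce by auto
    then show ?thesis using that by blast
  qed
qed

lemma cover_len: "bruhat_cover y z \<Longrightarrow> length z = length y"
  unfolding bruhat_cover_def by auto

lemma lift_aux:
  assumes "bruhat_cover\<^sup>*\<^sup>* u x" "Suc a < n" "is_perm n x" "x ! a < x ! Suc a"
  shows "length u = n \<longrightarrow> bruhat_cover\<^sup>*\<^sup>* (act u (transp_perm n a (Suc a))) (act x (transp_perm n a (Suc a)))"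
  using assms(1)
proof (induction rule: converse_rtranclp_induct)
  case base
  then show ?case by simp
next
  case (step y z)
  show ?case
  proof
    assume ly: "length y = n"
    then have lz: "length z = n" using cover_len[OF step.hyps(1)] by simp
    have IH: "bruhat_cover\<^sup>*\<^sup>* (act z (transp_perm n a (Suc a))) (act x (transp_perm n a (Suc a)))"
      using step.IH lz by simp
    from cover_conj[OF step.hyps(1) ly assms(2)] show
      "bruhat_cover\<^sup>*\<^sup>* (act y (transp_perm n a (Suc a))) (act x (transp_perm n a (Suc a)))"
    proof cases
      case 1
      then show ?thesis using step.hyps(2) cover_S[OF assms(3) assms(2) assms(4)]
        by (simp add: rtranclp.rtrancl_into_rtrancl)
    next
      case 2
      then show ?thesis using IH by (rule converse_rtranclp_into_rtranclp)
    qed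
  qed
qed

lemma drop_aux:
  assumes "bruhat_cover\<^sup>*\<^sup>* u X" "Suc a < n" "is_perm n x" "x ! a < x ! Suc a"
  shows "X = act x (transp_perm n a (Suc a)) \<longrightarrow> length u = n \<longrightarrow>
    bruhat_cover\<^sup>*\<^sup>* u x \<or> bruhat_cover\<^sup>*\<^sup>* (act u (transp_perm n a (Suc a))) x"
  using assms(1)
proof (induction rule: converse_rtranclp_induct)
  case base
  have "length x = n" using assms(3) unfolding is_perm_def by simp
  then show ?case using act_tp_tp[of x n a "Suc a"] assms(2) by auto
next
  case (step y z)
  show ?case
  proof (intro impI)
    assume X: "X = act x (transp_perm n a (Suc a))" and ly: "length y = n"
    then have lz: "length z = n" using cover_len[OF step.hyps(1)] by simp
    have IH: "bruhat_cover\<^sup>*\<^sup>* z x \<or> bruhat_cover\<^sup>*\<^sup>* (act z (transp_perm n a (Suc a))) x"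
      using step.IH lz X by simp
    show "bruhat_cover\<^sup>*\<^sup>* y x \<or> bruhat_cover\<^sup>*\<^sup>* (act y (transp_perm n a (Suc a))) x"
    proof (cases "bruhat_cover\<^sup>*\<^sup>* z x")
      case True
      then show ?thesis using step.hyps(1) by (meson converse_rtranclp_into_rtranclp)
    next
      case False
      then have zx: "bruhat_cover\<^sup>*\<^sup>* (act z (transp_perm n a (Suc a))) x" using IH by simp
      from cover_conj[OF step.hyps(1) ly assms(2)] show ?thesis
      proof cases
        case 1
        then have "act z (transp_perm n a (Suc a)) = y" using act_tp_tp[OF ly, of a "Suc a"] assms(2) by simp
        then show ?thesis using zx by simp
      next
        case 2
        then show ?thesis using zx by (meson converse_rtranclp_into_rtranclp)
      qed
    qed
  qed
qed


definition Sol :: "nat list \<Rightarrow> nat list \<Rightarrow> bool" where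
  "Sol g w \<longleftrightarrow> is_perm (length g) w \<and> act (lam g) w = g"

definition Mprop :: "nat list \<Rightarrow> nat list \<Rightarrow> bool" where
  "Mprop g w \<longleftrightarrow> (\<forall>p q. p < q \<longrightarrow> q < length g \<longrightarrow> g ! p = g ! q \<longrightarrow> w ! p < w ! q)"

lemma sol_exists: "\<exists>w. Sol g w"
proof -
  have "mset g = mset (lam g)" by (simp add: mset_lam)
  then obtain p where p: "p permutes {..<length (lam g)}" "permute_list p (lam g) = g"
    by (rule mset_eq_permutation)
  define n where "n = length g"
  have pn: "p permutes {0..<n}" using p(1) by (simp add: n_def atLeast0LessThan)
  define w where "w = map p [0..<n]"
  have "act (lam g) w = permute_list p (lam g)"
    by (simp add: act_def w_def permute_list_def n_def)
  also have "\<dots> = g" by (rule p(2))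
  finally have e: "act (lam g) w = g" .
  have "distinct w" unfolding w_def using permutes_inj[OF pn]
    by (simp add: distinct_map inj_on_subset[of p UNIV])
  moreover have "set w = {0..<n}" unfolding w_def using permutes_image[OF pn] by simp
  ultimately have "is_perm n w" by (simp add: is_perm_def w_def)
  then show ?thesis using e by (auto simp: Sol_def n_def)
qed

lemma sol_nth: "Sol g w \<Longrightarrow> p < length g \<Longrightarrow> g ! p = lam g ! (w ! p)"
  unfolding Sol_def is_perm_def by (metis act_nth)

lemma sol_lt: "Sol g w \<Longrightarrow> p < length g \<Longrightarrow> w ! p < length g"
  unfolding Sol_def is_perm_def by (metis atLeastLessThan_iff nth_mem)

lemma formula:
  assumes S: "Sol g w" and M: "Mprop g w" and k: "k < length g"
  shows "w ! k = card {p. p < length g \<and> (g ! p > g ! k \<or> (g ! p = g ! k \<and> p < k))}"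
proof -
  define n where "n = length g"
  have lw: "length w = n" and dw: "distinct w" and sw: "set w = {0..<n}"
    using S unfolding Sol_def is_perm_def n_def by auto
  have key: "w ! p < w ! k \<longleftrightarrow> (g ! p > g ! k \<or> (g ! p = g ! k \<and> p < k))" if p: "p < n" for p
  proof
    assume lt: "w ! p < w ! k"
    have "lam g ! (w ! k) \<le> lam g ! (w ! p)"
      using lt sol_lt[OF S k] by (intro lam_desc) auto
    then have ge: "g ! k \<le> g ! p" using sol_nth[OF S] p k n_def by simp
    show "g ! p > g ! k \<or> (g ! p = g ! k \<and> p < k)"
    proof (rule ccontr)
      assume "\<not> ?thesis"
      then have "g ! p = g ! k" "\<not> p < k" using ge by auto
      moreover have "p \<noteq> k" using lt by auto
      ultimately have "w ! k < w ! p" using M p n_def unfolding Mprop_def by auto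
      then show False using lt by simp
    qed
  next
    assume h: "g ! p > g ! k \<or> (g ! p = g ! k \<and> p < k)"
    show "w ! p < w ! k"
    proof (cases "g ! p > g ! k")
      case True
      show ?thesis
      proof (rule ccontr)
        assume "\<not> w ! p < w ! k"
        then have "lam g ! (w ! p) \<le> lam g ! (w ! k)"
          using sol_lt[OF S] p n_def by (intro lam_desc) auto
        then show False using True sol_nth[OF S] p k n_def by simp
      qed
    next
      case False
      then show ?thesis using h M k unfolding Mprop_def by auto
    qed
  qed
  have setq: "{p. p < length g \<and> (g ! p > g ! k \<or> (g ! p = g ! k \<and> p < k))} = {p. p < n \<and> w ! p < w ! k}"
    using key n_def by auto
  have inj: "inj_on (\<lambda>p. w ! p) {p. p < n \<and> w ! p < w ! k}"
    using dw lw by (auto simp: inj_on_def nth_eq_iff_index_eq)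
  have img: "(\<lambda>p. w ! p) ` {p. p < n \<and> w ! p < w ! k} = {..<w ! k}"
  proof
    show "(\<lambda>p. w ! p) ` {p. p < n \<and> w ! p < w ! k} \<subseteq> {..<w ! k}" by auto
    show "{..<w ! k} \<subseteq> (\<lambda>p. w ! p) ` {p. p < n \<and> w ! p < w ! k}"
    proof
      fix j assume j: "j \<in> {..<w ! k}"
      have "w ! k < n" using sol_lt[OF S k] n_def by simp
      then have "j \<in> set w" using j sw by auto
      then obtain p where "p < n" "w ! p = j" using lw by (auto simp: in_set_conv_nth)
      then show "j \<in> (\<lambda>p. w ! p) ` {p. p < n \<and> w ! p < w ! k}" using j by auto
    qed
  qed
  have "card {p. p < n \<and> w ! p < w ! k} = card {..<w ! k}"
    using card_image[OF inj] img by simp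
  then show ?thesis using setq by simp
qed

lemma uniq: "Sol g w1 \<Longrightarrow> Mprop g w1 \<Longrightarrow> Sol g w2 \<Longrightarrow> Mprop g w2 \<Longrightarrow> w1 = w2"
proof (rule nth_equalityI)
  assume a: "Sol g w1" "Mprop g w1" "Sol g w2" "Mprop g w2"
  then show "length w1 = length w2" by (simp add: Sol_def is_perm_def)
  fix i assume "i < length w1"
  then have "i < length g" using a by (simp add: Sol_def is_perm_def)
  then show "w1 ! i = w2 ! i" using formula[OF a(1,2)] formula[OF a(3,4)] by simp
qed

lemma min_M:
  assumes S: "Sol g w" and mn: "\<forall>w'. Sol g w' \<longrightarrow> inv_count w \<le> inv_count w'"
  shows "Mprop g w"
  unfolding Mprop_def
proof (intro allI impI)
  fix p q assume pq: "p < q" "q < length g" "g ! p = g ! q"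
  define n where "n = length g"
  have pw: "is_perm n w" and lw: "length w = n" and dw: "distinct w" and sw: "set w = {0..<n}"
    using S unfolding Sol_def is_perm_def n_def by auto
  show "w ! p < w ! q"
  proof (rule ccontr)
    assume "\<not> w ! p < w ! q"
    moreover have "w ! p \<noteq> w ! q" using dw lw pq n_def by (simp add: nth_eq_iff_index_eq)
    ultimately have gt: "w ! p > w ! q" by simp
    define w' where "w' = act w (transp_perm n p q)"
    have pw': "is_perm n w'" unfolding w'_def using is_perm_act[OF pw is_perm_tp] pq n_def by simp
    have "act (lam g) w' = act (act (lam g) w) (transp_perm n p q)"
      unfolding w'_def using lw pq n_def by (subst act_assoc) (auto simp: transp_perm_def)
    also have "\<dots> = act g (transp_perm n p q)" using S by (simp add: Sol_def)
    also have "\<dots> = g" using act_tp_same[of g n p q] pq n_def by simp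
    finally have "Sol g w'" using pw' by (simp add: Sol_def n_def)
    moreover have "inv_count w' < inv_count w"
      unfolding w'_def using swap_dec[OF lw pq(1) _ gt] pq n_def by simp
    ultimately show False using mn by fastforce
  qed
qed

lemma wperm_alt: "wperm g = (THE w. Sol g w \<and> (\<forall>w'. Sol g w' \<longrightarrow> inv_count w \<le> inv_count w'))"
  unfolding wperm_def Sol_def by simp

lemma wperm_props: "Sol g (wperm g) \<and> Mprop g (wperm g)"
proof -
  have ex: "\<exists>w. Sol g w \<and> (\<forall>w'. Sol g w' \<longrightarrow> inv_count w \<le> inv_count w')"
    using sol_exists ex_has_least_nat[of "Sol g"] by blast
  have "\<exists>!w. Sol g w \<and> (\<forall>w'. Sol g w' \<longrightarrow> inv_count w \<le> inv_count w')"
    using ex uniq min_M by blast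
  then have "Sol g (wperm g) \<and> (\<forall>w'. Sol g w' \<longrightarrow> inv_count (wperm g) \<le> inv_count w')"
    unfolding wperm_alt by (rule theI')
  then show ?thesis using min_M by blast
qed

lemma wperm_eq: "Sol g w \<Longrightarrow> Mprop g w \<Longrightarrow> wperm g = w"
  using uniq wperm_props by blast

lemma wperm_perm: "is_perm (length g) (wperm g)"
  using wperm_props unfolding Sol_def by blast

lemma wperm_len[simp]: "length (wperm g) = length g"
  using wperm_perm unfolding is_perm_def by blast

lemma wperm_act:
  assumes lv: "length v = n" and a: "Suc a < n" and ne: "v ! a \<noteq> v ! Suc a"
  shows "wperm (act v (transp_perm n a (Suc a))) = act (wperm v) (transp_perm n a (Suc a))"
proof (rule wperm_eq)
  let ?S = "transp_perm n a (Suc a)"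
  let ?U = "wperm v"
  have pS: "is_perm n ?S" using a by (intro is_perm_tp) auto
  have lamv: "lam (act v ?S) = lam v" using lam_act[of v ?S] pS lv by simp
  have SU: "Sol v ?U" "Mprop v ?U" using wperm_props by auto
  have pU: "is_perm n ?U" using wperm_perm[of v] lv by simp
  have "act (lam v) (act ?U ?S) = act (act (lam v) ?U) ?S"
    using lv a by (subst act_assoc) (auto simp: transp_perm_def)
  also have "\<dots> = act v ?S" using SU by (simp add: Sol_def)
  finally show "Sol (act v ?S) (act ?U ?S)"
    unfolding Sol_def using lamv is_perm_act[OF pU pS] by simp
  show "Mprop (act v ?S) (act ?U ?S)"
    unfolding Mprop_def
  proof (intro allI impI)
    fix p q assume pq: "p < q" "q < length (act v ?S)" "act v ?S ! p = act v ?S ! q"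
    have qn: "q < n" "p < n" using pq by auto
    have e: "v ! tau a (Suc a) p = v ! tau a (Suc a) q" using pq qn by simp
    have "(p, q) \<noteq> (a, Suc a)" using e ne by (auto simp: tau_def)
    then have lt: "tau a (Suc a) p < tau a (Suc a) q" using tau_s_mono pq by blast
    have "tau a (Suc a) q < n" using qn a tau_lt by simp
    then have "?U ! tau a (Suc a) p < ?U ! tau a (Suc a) q"
      using SU(2) lt e lv unfolding Mprop_def by auto
    then show "act ?U ?S ! p < act ?U ?S ! q" using qn by simp
  qed
qed

lemma wperm_ascent:
  assumes "Suc a < length g" "g ! a > g ! Suc a"
  shows "wperm g ! a < wperm g ! Suc a"
proof (rule ccontr)
  have S: "Sol g (wperm g)" using wperm_props by blast
  assume "\<not> ?thesis"
  then have "lam g ! (wperm g ! a) \<le> lam g ! (wperm g ! Suc a)"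
    using sol_lt[OF S] assms by (intro lam_desc) auto
  then show False using sol_nth[OF S] assms by simp
qed

lemma wperm_eqval:
  assumes "Suc a < length g" "g ! a = g ! Suc a"
  shows "wperm g ! a < wperm g ! Suc a"
  using wperm_props assms unfolding Mprop_def by blast

lemma comp_le_iff: "comp_le b g \<longleftrightarrow> length b = length g \<and> lam b = lam g \<and>
   bruhat_cover\<^sup>*\<^sup>* (wperm b) (wperm g)"
  unfolding comp_le_def bruhat_le_def using wperm_perm by auto

theorem proposition4p3:
  fixes \<alpha> :: "nat list" and r :: nat
  assumes "1 \<le> r" and "r \<le> length \<alpha> - 1"
    and "\<alpha> ! (r - 1) < \<alpha> ! r"
  shows "Vset \<alpha> = Vset (act \<alpha> (s_adj (length \<alpha>) r)) \<union>
           {act v (s_adj (length \<alpha>) r) | v. v \<in> Vset (act \<alpha> (s_adj (length \<alpha>) r))}"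
proof -
  define n where "n = length \<alpha>"
  define a where "a = r - 1"
  have ra: "r = Suc a" using assms(1) a_def by simp
  have an: "Suc a < n" using assms(1,2) ra n_def by simp
  define S where "S = transp_perm n a (Suc a)"
  have sS: "s_adj (length \<alpha>) r = S" by (simp add: s_adj_def S_def n_def ra)
  have pS: "is_perm n S" unfolding S_def using an by (intro is_perm_tp) auto
  have alt: "\<alpha> ! a < \<alpha> ! Suc a" using assms(3) ra by simp
  define al2 where "al2 = act \<alpha> S"
  have l': "length al2 = n" by (simp add: al2_def S_def)
  have lam': "lam al2 = lam \<alpha>" unfolding al2_def using lam_act pS n_def by simp
  have bck: "act al2 S = \<alpha>" unfolding al2_def S_def using act_tp_tp[of "\<alpha>" n a "Suc a"] an n_def by simp
  have a'1: "al2 ! a = \<alpha> ! Suc a" "al2 ! Suc a = \<alpha> ! a"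
    unfolding al2_def S_def using an n_def by (auto simp: tau_def)
  define X where "X = wperm al2"
  define W where "W = wperm \<alpha>"
  have WX: "W = act X S" unfolding W_def X_def S_def
    using wperm_act[OF l' an] a'1 alt bck S_def by auto
  have Xasc: "X ! a < X ! Suc a" unfolding X_def using wperm_ascent[of a al2] a'1 alt l' an by simp
  have pX: "is_perm n X" unfolding X_def using wperm_perm l' by metis
  have cXW: "bruhat_cover X W" unfolding WX S_def by (rule cover_S[OF pX an Xasc])
  have VS: "Vset \<alpha> = Vset al2 \<union> {act v S | v. v \<in> Vset al2}"
  proof (intro equalityI subsetI)
    fix b assume "b \<in> Vset \<alpha>"
    then have lb: "length b = n" and lamb: "lam b = lam \<alpha>" and UW: "bruhat_cover\<^sup>*\<^sup>* (wperm b) W"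
      unfolding Vset_def comp_le_iff W_def n_def by auto
    have "bruhat_cover\<^sup>*\<^sup>* (wperm b) X \<or> bruhat_cover\<^sup>*\<^sup>* (act (wperm b) S) X"
      using drop_aux[OF UW an pX Xasc] WX lb unfolding S_def by simp
    then show "b \<in> Vset al2 \<union> {act v S | v. v \<in> Vset al2}"
    proof
      assume "bruhat_cover\<^sup>*\<^sup>* (wperm b) X"
      then show ?thesis unfolding Vset_def comp_le_iff X_def using lb l' lamb lam' by auto
    next
      assume h: "bruhat_cover\<^sup>*\<^sup>* (act (wperm b) S) X"
      show ?thesis
      proof (cases "b ! a = b ! Suc a")
        case True
        have "wperm b ! a < wperm b ! Suc a" using wperm_eqval[of a b] True lb an by simp
        then have "bruhat_cover (wperm b) (act (wperm b) S)"
          unfolding S_def using cover_S[OF _ an] wperm_perm lb by metis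
        then have "bruhat_cover\<^sup>*\<^sup>* (wperm b) X" using h
          by (meson converse_rtranclp_into_rtranclp)
        then show ?thesis unfolding Vset_def comp_le_iff X_def using lb l' lamb lam' by auto
      next
        case False
        define v where "v = act b S"
        have lv: "length v = n" by (simp add: v_def S_def)
        have wv: "wperm v = act (wperm b) S" unfolding v_def S_def using wperm_act[OF lb an False] .
        have lamv: "lam v = lam b" unfolding v_def using lam_act pS lb by simp
        have "v \<in> Vset al2" unfolding Vset_def comp_le_iff X_def using lv l' lamv lamb lam' wv h X_def
          by simp
        moreover have "b = act v S" unfolding v_def S_def using act_tp_tp[OF lb, of a "Suc a"] an by simp
        ultimately show ?thesis by blast
      qed
    qed
  next
    fix b assume "b \<in> Vset al2 \<union> {act v S | v. v \<in> Vset al2}"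
    then show "b \<in> Vset \<alpha>"
    proof
      assume "b \<in> Vset al2"
      then have lb: "length b = n" and lamb: "lam b = lam al2" and UX: "bruhat_cover\<^sup>*\<^sup>* (wperm b) X"
        unfolding Vset_def comp_le_iff X_def using l' by auto
      have "bruhat_cover\<^sup>*\<^sup>* (wperm b) W" using UX cXW by (simp add: rtranclp.rtrancl_into_rtrancl)
      then show ?thesis unfolding Vset_def comp_le_iff W_def using lb lamb lam' n_def by simp
    next
      assume "b \<in> {act v S | v. v \<in> Vset al2}"
      then obtain v where bv: "b = act v S" and "v \<in> Vset al2" by blast
      then have lv: "length v = n" and lamv: "lam v = lam al2" and VX: "bruhat_cover\<^sup>*\<^sup>* (wperm v) X"
        unfolding Vset_def comp_le_iff X_def using l' by auto
      have lb: "length b = n" using bv by (simp add: S_def)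
      have lamb: "lam b = lam v" unfolding bv using lam_act pS lv by simp
      have "bruhat_cover\<^sup>*\<^sup>* (wperm b) W"
      proof (cases "v ! a = v ! Suc a")
        case True
        then have "b = v" unfolding bv S_def using act_tp_same[OF lv, of a "Suc a"] an by simp
        then show ?thesis using VX cXW by (simp add: rtranclp.rtrancl_into_rtrancl)
      next
        case False
        have "wperm b = act (wperm v) S" unfolding bv S_def using wperm_act[OF lv an False] .
        moreover have "bruhat_cover\<^sup>*\<^sup>* (act (wperm v) S) (act X S)"
          using lift_aux[OF VX an pX Xasc] lv unfolding S_def by simp
        ultimately show ?thesis using WX by simp
      qed
      then show ?thesis unfolding Vset_def comp_le_iff W_def using lb lamb lamv lam' n_def by simp
    qed
  qed
  show ?thesis unfolding sS VS al2_def by simp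
qed

end
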